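(* $\displaystyle\lim_{m\to\infty} csd(\mathbb{Z}_2\times Q_{2^{m+1}})=0.$
   Context: For a finite group $G$, $L_1(G)$ is the set of cyclic subgroups of $G$ and $csd(G)=\frac{1}{|L_1(G)|^2}|\{(H,K)\in L_1(G)^2: HK=KH\}|$. $Q_{2^{m+1}}=\langle x,y\mid x^{2^m}=e,\ y^2=x^{2^{m-1}},\ y^{-1}xy=x^{-1}\rangle$ is the generalized quaternion group of order $2^{m+1}$ ($m\geq 2$). *)

theory Defs
  imports "HOL-Algebra.Algebra" "HOL-Analysis.Analysis"
begin

definition cyclic_subgroups :: "('a, 'b) monoid_scheme \<Rightarrow> 'a set set" where
  "cyclic_subgroups G = {generate G {g} | g. g \<in> carrier G}"

definition csd :: "('a, 'b) monoid_scheme \<Rightarrow> real" where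
  "csd G = real (card {(H, K). H \<in> cyclic_subgroups G \<and> K \<in> cyclic_subgroups G
                          \<and> H <#>\<^bsub>G\<^esub> K = K <#>\<^bsub>G\<^esub> H})
           / (real (card (cyclic_subgroups G)))^2"

text \<open>Concrete model of the generalized quaternion group Q_{2^(m+1)}:
  the pair (i, a) with 0 \<le> i < 2^m, a \<in> {0,1} stands for x^i y^a.
  Relations: x^(2^m) = e, y^2 = x^(2^(m-1)), y^-1 x y = x^-1 (so y x^j = x^-j y).\<close>
definition quat_mult :: "nat \<Rightarrow> nat \<times> nat \<Rightarrow> nat \<times> nat \<Rightarrow> nat \<times> nat" where
  "quat_mult m p q = (case p of (i, a) \<Rightarrow> case q of (j, b) \<Rightarrow>
     (if a = 0 then ((i + j) mod 2^m, b)
      else if b = 0 then ((i + (2^m - j)) mod 2^m, 1)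
      else ((i + (2^m - j) + 2^(m-1)) mod 2^m, 0)))"

definition quaternion_group :: "nat \<Rightarrow> (nat \<times> nat) monoid" where
  "quaternion_group m = \<lparr>carrier = {0..<2^m} \<times> {0..<2}, monoid.mult = quat_mult m, one = (0, 0)\<rparr>"

end

theory Submission
  imports Defs "HOL-Number_Theory.Cong" "HOL-Real_Asymp.Real_Asymp"
begin


lemma mod_lin1: "((a::int) mod c - b + d) mod c = (a - b + d) mod c"
  by (metis mod_add_left_eq mod_diff_left_eq)
lemma mod_lin2: "((a::int) mod c + b - d) mod c = (a + b - d) mod c"
  by (metis mod_add_left_eq mod_diff_left_eq)
lemma mod_lin3: "((a::int) - b mod c + d) mod c = (a - b + d) mod c"
  by (metis mod_add_left_eq mod_diff_right_eq)
lemma mod_lin4: "((a::int) + b mod c - d) mod c = (a + b - d) mod c"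
  by (metis mod_add_right_eq mod_diff_left_eq)

lemma qm_int:
  assumes "j < 2^m" "a < 2" "b < 2"
  shows "int (fst (quat_mult m (i,a) (j,b))) =
    (int i + (if a = 0 then int j else - int j) + (if a = 1 \<and> b = 1 then 2^(m-1) else 0)) mod 2^m"
    "snd (quat_mult m (i,a) (j,b)) = (if a = 0 then b else if b = 0 then 1 else 0)"
  using assms
  by (auto simp: quat_mult_def zmod_int of_nat_diff mod_simps) (simp_all add: mod_eq_dvd_iff)



lemma qm_fst_lt: "fst (quat_mult m p q) < 2^m"
  by (auto simp: quat_mult_def split: prod.splits)
lemma qm_snd_lt: "snd q < 2 \<Longrightarrow> snd (quat_mult m p q) < 2"
  by (auto simp: quat_mult_def split: prod.splits)

lemma two_pow_half: "m \<ge> 1 \<Longrightarrow> (2::int)^(m-1) + 2^(m-1) = 2^m"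
  by (metis Suc_diff_le diff_Suc_1 mult_2 power_Suc)

lemma qg_assoc:
  assumes m: "m \<ge> 1" and lt: "j < 2^m" "k < 2^m" "a < 2" "b < 2" "c < 2"
  shows "quat_mult m (quat_mult m (i,a) (j,b)) (k,c) = quat_mult m (i,a) (quat_mult m (j,b) (k,c))"
proof -
  obtain p1 p2 where p: "quat_mult m (i,a) (j,b) = (p1,p2)" by fastforce
  obtain q1 q2 where q: "quat_mult m (j,b) (k,c) = (q1,q2)" by fastforce
  have p1: "int p1 = (int i + (if a = 0 then int j else - int j) + (if a = 1 \<and> b = 1 then 2^(m-1) else 0)) mod 2^m"
   and p2: "p2 = (if a = 0 then b else if b = 0 then 1 else 0)"
    using qm_int[of j m a b i] lt p by auto
  have q1: "int q1 = (int j + (if b = 0 then int k else - int k) + (if b = 1 \<and> c = 1 then 2^(m-1) else 0)) mod 2^m"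
   and q2: "q2 = (if b = 0 then c else if c = 0 then 1 else 0)"
    using qm_int[of k m b c j] lt q by auto
  have q1lt: "q1 < 2^m" using qm_fst_lt[of m "(j,b)" "(k,c)"] q by simp
  have p2lt: "p2 < 2" "q2 < 2" using p2 q2 lt by auto
  have L1: "int (fst (quat_mult m (p1,p2) (k,c))) = (int p1 + (if p2 = 0 then int k else - int k) + (if p2 = 1 \<and> c = 1 then 2^(m-1) else 0)) mod 2^m"
    using qm_int[of k m p2 c p1] lt p2lt by auto
  have R1: "int (fst (quat_mult m (i,a) (q1,q2))) = (int i + (if a = 0 then int q1 else - int q1) + (if a = 1 \<and> q2 = 1 then 2^(m-1) else 0)) mod 2^m"
    using qm_int[of q1 m a q2 i] q1lt lt p2lt by auto
  have hh: "(2::int)^(m-1) + 2^(m-1) = 2^m" using two_pow_half m by simp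
  have "int (fst (quat_mult m (p1,p2) (k,c))) = int (fst (quat_mult m (i,a) (q1,q2)))"
    unfolding L1 R1 p1 q1
    using lt p2 q2 hh
    apply (subgoal_tac "a = 0 \<or> a = 1" "b = 0 \<or> b = 1" "c = 0 \<or> c = 1")
       apply (elim disjE)
    apply (simp_all add: mod_simps)
    apply (simp_all add: mod_eq_dvd_iff algebra_simps)
    apply (simp_all add: minus_div_mult_eq_mod[symmetric] algebra_simps)
    apply presburger+
    done
  moreover have "snd (quat_mult m (p1,p2) (k,c)) = snd (quat_mult m (i,a) (q1,q2))"
    using qm_int(2)[of k m p2 c p1] qm_int(2)[of q1 m a q2 i] q1lt lt p2lt p2 q2 by auto
  ultimately show ?thesis unfolding p q by (simp add: prod_eq_iff)
qed



lemma group_quat: assumes m: "m \<ge> 1" shows "group (quaternion_group m)"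
proof (rule groupI)
  let ?Q = "quaternion_group m"
  show "\<And>x y. x \<in> carrier ?Q \<Longrightarrow> y \<in> carrier ?Q \<Longrightarrow> x \<otimes>\<^bsub>?Q\<^esub> y \<in> carrier ?Q"
    using qm_fst_lt qm_snd_lt unfolding quaternion_group_def
    by (auto simp: mem_Times_iff)
  show "\<one>\<^bsub>?Q\<^esub> \<in> carrier ?Q" by (simp add: quaternion_group_def)
  show "\<And>x y z. x \<in> carrier ?Q \<Longrightarrow> y \<in> carrier ?Q \<Longrightarrow> z \<in> carrier ?Q \<Longrightarrow>
     x \<otimes>\<^bsub>?Q\<^esub> y \<otimes>\<^bsub>?Q\<^esub> z = x \<otimes>\<^bsub>?Q\<^esub> (y \<otimes>\<^bsub>?Q\<^esub> z)"
    using qg_assoc[OF m] unfolding quaternion_group_def by auto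
  show "\<And>x. x \<in> carrier ?Q \<Longrightarrow> \<one>\<^bsub>?Q\<^esub> \<otimes>\<^bsub>?Q\<^esub> x = x"
    unfolding quaternion_group_def by (auto simp: quat_mult_def)
  show "\<exists>y\<in>carrier ?Q. y \<otimes>\<^bsub>?Q\<^esub> x = \<one>\<^bsub>?Q\<^esub>" if x: "x \<in> carrier ?Q" for x
  proof -
    obtain i a where xe: "x = (i,a)" "i < 2^m" "a < 2" using x unfolding quaternion_group_def by auto
    have hh: "(2::int)^(m-1) + 2^(m-1) = 2^m" using two_pow_half m by simp
    show ?thesis
    proof (cases "a = 0")
      case True
      have "int (fst (quat_mult m ((2^m - i) mod 2^m, 0) (i,a))) = 0"
        using qm_int[of i m 0 a] xe True by (simp add: zmod_int of_nat_diff mod_simps)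
      moreover have "snd (quat_mult m ((2^m - i) mod 2^m, 0) (i,a)) = 0" using True by (simp add: quat_mult_def)
      ultimately show ?thesis using xe True unfolding quaternion_group_def xe(1)
        by (intro bexI[of _ "((2^m - i) mod 2^m, 0)"]) (auto simp: prod_eq_iff)
    next
      case False
      then have a1: "a = 1" using xe by auto
      have "int (fst (quat_mult m ((i + 2^(m-1)) mod 2^m, 1) (i,a))) = 0"
        using qm_int[of i m 1 a] xe a1 hh by (simp add: zmod_int mod_simps mod_lin1)
      moreover have "snd (quat_mult m ((i + 2^(m-1)) mod 2^m, 1) (i,a)) = 0" using a1 by (simp add: quat_mult_def)
      ultimately show ?thesis using xe a1 unfolding quaternion_group_def xe(1)
        by (intro bexI[of _ "((i + 2^(m-1)) mod 2^m, 1)"]) (auto simp: prod_eq_iff)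
    qed
  qed
qed

abbreviation GG :: "nat \<Rightarrow> (int \<times> nat \<times> nat) monoid" where
  "GG m \<equiv> integer_mod_group 2 \<times>\<times> quaternion_group m"

lemma group_GG: "m \<ge> 1 \<Longrightarrow> group (GG m)"
  by (simp add: DirProd_group group_quat)

lemma carrier_GG: "carrier (GG m) = {0..<2} \<times> ({0..<2^m} \<times> {0..<2})"
  by (simp add: carrier_integer_mod_group quaternion_group_def)

lemma finite_GG: "finite (carrier (GG m))"
  unfolding carrier_GG by simp

lemma mult_GG: "(c,p) \<otimes>\<^bsub>GG m\<^esub> (d,q) = ((c + d) mod 2, quat_mult m p q)"
  by (simp add: quaternion_group_def)

lemma pow_DirProd: "(g,h) [^]\<^bsub>G \<times>\<times> H\<^esub> (n::nat) = (g [^]\<^bsub>G\<^esub> n, h [^]\<^bsub>H\<^esub> n)"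
  by (induction n) auto

lemma pow_quat_rot: "i < 2^m \<Longrightarrow> (i,0) [^]\<^bsub>quaternion_group m\<^esub> (n::nat) = ((i*n) mod 2^m, 0)"
proof (induction n)
  case 0 then show ?case by (simp add: quaternion_group_def)
next
  case (Suc n) then show ?case by (simp add: quaternion_group_def quat_mult_def mod_simps algebra_simps)
qed

lemma pow_GG_rot: "i < 2^m \<Longrightarrow> (c,(i,0)) [^]\<^bsub>GG m\<^esub> (n::nat) = ((int n * c) mod 2, ((i*n) mod 2^m, 0))"
  by (simp add: pow_DirProd pow_quat_rot)

lemma mem_Z2: "c \<in> carrier (integer_mod_group 2) \<longleftrightarrow> c = 0 \<or> c = 1"
proof -
  have "c \<in> carrier (integer_mod_group 2) \<longleftrightarrow> 0 \<le> c \<and> c < 2"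
    unfolding carrier_integer_mod_group by simp
  also have "\<dots> \<longleftrightarrow> c = 0 \<or> c = 1" by presburger
  finally show ?thesis .
qed
lemma mem_Q: "(i,a) \<in> carrier (quaternion_group m) \<longleftrightarrow> i < 2^m \<and> a < 2"
  by (simp add: quaternion_group_def)
lemma mem_GG: "((c,(i,a)) \<in> carrier (GG m)) \<longleftrightarrow> (c = 0 \<or> c = 1) \<and> i < 2^m \<and> a < 2"
  by (simp only: carrier_DirProd mem_Times_iff fst_conv snd_conv mem_Z2 mem_Q)



lemma pair_int_eqI: "int (fst p) = int x \<Longrightarrow> snd p = y \<Longrightarrow> p = (x,y)"
  by (simp add: prod_eq_iff)

lemma mult_quat[simp]: "x \<otimes>\<^bsub>quaternion_group m\<^esub> y = quat_mult m x y"
  by (simp add: quaternion_group_def)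
lemma one_quat[simp]: "\<one>\<^bsub>quaternion_group m\<^esub> = (0,0)"
  by (simp add: quaternion_group_def)

lemma h_lt: "m \<ge> 1 \<Longrightarrow> (2::nat)^(m-1) < 2^m"
  by simp

lemma qy_sq: assumes "m \<ge> 1" "i < 2^m" shows "quat_mult m (i,1) (i,1) = (2^(m-1), 0)"
proof (rule pair_int_eqI)
  show "int (fst (quat_mult m (i, 1) (i, 1))) = int (2 ^ (m - 1))"
    using qm_int(1)[of i m 1 1 i] assms by simp
qed (simp add: quat_mult_def)

lemma qy_cube: assumes "m \<ge> 1" "i < 2^m" shows "quat_mult m (2^(m-1),0) (i,1) = ((i + 2^(m-1)) mod 2^m, 1)"
  by (simp add: quat_mult_def add.commute)

lemma qy_4: assumes "m \<ge> 1" "i < 2^m" shows "quat_mult m ((i + 2^(m-1)) mod 2^m,1) (i,1) = (0,0)"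
proof (rule pair_int_eqI)
  have hh: "(2::int)^(m-1) + 2^(m-1) = 2^m" using two_pow_half assms by simp
  show "int (fst (quat_mult m ((i + 2^(m-1)) mod 2^m,1) (i, 1))) = int 0"
    using qm_int(1)[of i m 1 1 "(i + 2^(m-1)) mod 2^m"] assms hh by (simp add: zmod_int mod_lin1)
qed (simp add: quat_mult_def)

lemma set4: "{f k | k. k < (4::nat)} = {f 0, f 1, f 2, f 3}"
proof -
  have "{k. k < (4::nat)} = {0,1,2,3}" by (auto simp: numeral_eq_Suc less_Suc_eq)
  then show ?thesis by (simp add: setcompr_eq_image)
qed

lemma Suc3: "Suc 3 = 4" by simp

lemma gen_y:
  assumes m: "m \<ge> 1" and c: "c \<in> {0,1}" and i: "i < 2^m"
  shows "generate (GG m) {(c,(i,1))} =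
    {(0,(0,0)), (c,(i,1)), (0,(2^(m-1),0)), (c,((i+2^(m-1)) mod 2^m,1))}"
proof -
  let ?g = "(c,(i,1::nat))"
  interpret G: group "GG m" using group_GG m by simp
  have gc: "?g \<in> carrier (GG m)" unfolding mem_GG using c i by simp
  have p1: "?g [^]\<^bsub>GG m\<^esub> (1::nat) = ?g"
  proof -
    have "?g [^]\<^bsub>GG m\<^esub> (1::nat) = ?g [^]\<^bsub>GG m\<^esub> (0::nat) \<otimes>\<^bsub>GG m\<^esub> ?g"
      by (simp only: One_nat_def nat_pow_Suc)
    then show ?thesis using G.l_one[OF gc] by (simp only: nat_pow_0)
  qed
  have p2: "?g [^]\<^bsub>GG m\<^esub> (2::nat) = (0,(2^(m-1),0))"
  proof -
    have "?g [^]\<^bsub>GG m\<^esub> (2::nat) = ?g [^]\<^bsub>GG m\<^esub> (1::nat) \<otimes>\<^bsub>GG m\<^esub> ?g"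
      by (simp only: numeral_2_eq_2 nat_pow_Suc One_nat_def)
    also have "\<dots> = (0,(2^(m-1),0))" using c
      by (simp only: p1 mult_GG qy_sq[OF m i]) auto
    finally show ?thesis .
  qed
  have p3: "?g [^]\<^bsub>GG m\<^esub> (3::nat) = (c,((i+2^(m-1)) mod 2^m,1))"
  proof -
    have "?g [^]\<^bsub>GG m\<^esub> (3::nat) = ?g [^]\<^bsub>GG m\<^esub> (2::nat) \<otimes>\<^bsub>GG m\<^esub> ?g"
      by (simp only: numeral_3_eq_3 numeral_2_eq_2 nat_pow_Suc)
    also have "\<dots> = (c,((i+2^(m-1)) mod 2^m,1))" using c
      by (simp only: p2 mult_GG qy_cube[OF m i]) auto
    finally show ?thesis .
  qed
  have p4: "?g [^]\<^bsub>GG m\<^esub> (4::nat) = \<one>\<^bsub>GG m\<^esub>"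
  proof -
    have "?g [^]\<^bsub>GG m\<^esub> (4::nat) = ?g [^]\<^bsub>GG m\<^esub> (3::nat) \<otimes>\<^bsub>GG m\<^esub> ?g"
      by (simp only: nat_pow_Suc flip: Suc3)
    also have "\<dots> = (0,(0,0))" using c
      by (simp only: p3 mult_GG qy_4[OF m i]) auto
    finally show ?thesis by (simp add: quaternion_group_def)
  qed
  have pk: "?g [^]\<^bsub>GG m\<^esub> k = ?g [^]\<^bsub>GG m\<^esub> (k mod 4)" for k :: nat
  proof -
    have "?g [^]\<^bsub>GG m\<^esub> k = ?g [^]\<^bsub>GG m\<^esub> (4 * (k div 4) + k mod 4)" by simp
    also have "\<dots> = (?g [^]\<^bsub>GG m\<^esub> (4::nat)) [^]\<^bsub>GG m\<^esub> (k div 4) \<otimes>\<^bsub>GG m\<^esub> ?g [^]\<^bsub>GG m\<^esub> (k mod 4)"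
      using gc by (simp add: G.nat_pow_mult G.nat_pow_pow)
    also have "\<dots> = ?g [^]\<^bsub>GG m\<^esub> (k mod 4)"
      by (simp only: p4 G.nat_pow_one) (rule G.l_one, rule G.nat_pow_closed, rule gc)
    finally show ?thesis .
  qed
  have "generate (GG m) {?g} = {?g [^]\<^bsub>GG m\<^esub> k | k. k \<in> (UNIV :: nat set)}"
    using G.generate_pow_on_finite_carrier[OF finite_GG gc] by simp
  also have "\<dots> = {?g [^]\<^bsub>GG m\<^esub> k | k. k < (4::nat)}"
  proof
    show "{?g [^]\<^bsub>GG m\<^esub> k | k. k \<in> (UNIV :: nat set)} \<subseteq> {?g [^]\<^bsub>GG m\<^esub> k | k. k < (4::nat)}"
    proof
      fix x assume "x \<in> {?g [^]\<^bsub>GG m\<^esub> k | k. k \<in> (UNIV :: nat set)}"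
      then obtain k :: nat where "x = ?g [^]\<^bsub>GG m\<^esub> k" by blast
      then have "x = ?g [^]\<^bsub>GG m\<^esub> (k mod 4)" "k mod 4 < 4" using pk[of k] by auto
      then show "x \<in> {?g [^]\<^bsub>GG m\<^esub> k | k. k < (4::nat)}" by blast
    qed
  qed auto
  also have "\<dots> = {?g [^]\<^bsub>GG m\<^esub> (0::nat), ?g [^]\<^bsub>GG m\<^esub> (1::nat), ?g [^]\<^bsub>GG m\<^esub> (2::nat), ?g [^]\<^bsub>GG m\<^esub> (3::nat)}"
    by (rule set4)
  also have "\<dots> = {(0,(0,0)), (c,(i,1)), (0,(2^(m-1),0)), (c,((i+2^(m-1)) mod 2^m,1))}"
    by (simp only: p1 p2 p3 nat_pow_0 one_DirProd one_quat one_integer_mod_group)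
  finally show ?thesis .
qed



lemma pow2_odd: "(i::nat) > 0 \<Longrightarrow> \<exists>v u. i = 2^v * u \<and> odd u"
proof (induction i rule: less_induct)
  case (less i)
  show ?case
  proof (cases "even i")
    case True
    then obtain j where j: "i = 2 * j" by blast
    then have "j < i" "j > 0" using less.prems by auto
    then obtain v u where "j = 2^v * u" "odd u" using less.IH by blast
    then show ?thesis using j by (intro exI[of _ "Suc v"] exI[of _ u]) auto
  next
    case False
    then show ?thesis by (intro exI[of _ 0] exI[of _ i]) auto
  qed
qed

lemma gen_eqI:
  assumes "group G" "x \<in> carrier G" "y \<in> carrier G"
    "x \<in> generate G {y}" "y \<in> generate G {x}"
  shows "generate G {x} = generate G {y}"
proof -
  interpret group G by fact
  have sx: "subgroup (generate G {x}) G" using assms(2) by (intro generate_is_subgroup) auto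
  have sy: "subgroup (generate G {y}) G" using assms(3) by (intro generate_is_subgroup) auto
  have "generate G {x} \<subseteq> generate G {y}" using assms(4) by (intro generate_subgroup_incl[OF _ sy]) auto
  moreover have "generate G {y} \<subseteq> generate G {x}" using assms(5) by (intro generate_subgroup_incl[OF _ sx]) auto
  ultimately show ?thesis by (rule subset_antisym)
qed

lemma pow_in_gen:
  assumes "finite (carrier G)" "group G" "y \<in> carrier G"
  shows "y [^]\<^bsub>G\<^esub> (k::nat) \<in> generate G {y}"
proof -
  interpret group G by fact
  show ?thesis using generate_pow_on_finite_carrier[OF assms(1,3)] by blast
qed

lemma odd_c: "odd (u::nat) \<Longrightarrow> c \<in> {0,1::int} \<Longrightarrow> (int u * c) mod 2 = c"
proof -
  assume "odd u" "c \<in> {0,1::int}"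
  then have "odd (int u)" by simp
  then have "int u mod 2 = 1" using odd_iff_mod_2_eq_one by blast
  then show ?thesis using \<open>c \<in> {0,1}\<close> by auto
qed

lemma gen_rot:
  assumes m: "m \<ge> 1" and c: "c \<in> {0,1}" and i: "i < 2^m"
  shows "\<exists>v\<le>m. generate (GG m) {(c,(i,0))} = generate (GG m) {(c,(2^v mod 2^m,0))}"
proof (cases "i = 0")
  case True
  then show ?thesis by (intro exI[of _ m]) auto
next
  case False
  then obtain v u where vu: "i = 2^v * u" "odd u" using pow2_odd by blast
  have "u \<ge> 1" using vu(2) by (cases u) auto
  then have "2^v \<le> i" using vu(1) by simp
  then have "(2::nat)^v < 2^m" using i by linarith
  then have vm: "v < m" by simp
  have md: "(2::nat)^v mod 2^m = 2^v" using \<open>(2::nat)^v < 2^m\<close> by simp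
  let ?x = "(c,(i,0::nat))" and ?y = "(c,((2::nat)^v,0::nat))"
  have gG: "group (GG m)" using group_GG m by simp
  have xc: "?x \<in> carrier (GG m)" and yc: "?y \<in> carrier (GG m)"
    unfolding mem_GG using c i \<open>(2::nat)^v < 2^m\<close> by simp_all
  have "?y [^]\<^bsub>GG m\<^esub> u = ?x"
    using pow_GG_rot[OF \<open>(2::nat)^v < 2^m\<close>, of c u] vu i odd_c[OF vu(2) c] by simp
  then have x_in: "?x \<in> generate (GG m) {?y}" using pow_in_gen[OF finite_GG gG yc, of u] by simp
  have "coprime u (2^m)" using vu(2) by simp
  then obtain w where w: "[u * w = Suc 0] (mod 2^m)" using cong_solve_coprime_nat by blast
  then have "(u * w) mod 2 = 1"
  proof -
    have "(2::nat) dvd 2^m" using m by (simp add: dvd_power)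
    then have "[u * w = Suc 0] (mod 2)" using cong_dvd_modulus_nat[OF w] by blast
    then show ?thesis by (simp add: cong_def)
  qed
  then have "odd (u * w)" using odd_iff_mod_2_eq_one by (metis One_nat_def)
  then have wodd: "odd w" by simp
  have "(i * w) mod 2^m = 2^v mod 2^m"
  proof -
    have "(i * w) mod 2^m = (2^v * (u * w)) mod 2^m" using vu by (simp add: mult.assoc)
    also have "\<dots> = (2^v * 1) mod 2^m" using w by (metis One_nat_def cong_def mod_mult_right_eq)
    finally show ?thesis by simp
  qed
  then have "?x [^]\<^bsub>GG m\<^esub> w = ?y"
    using pow_GG_rot[OF i, of c w] odd_c[OF wodd c] md by simp
  then have y_in: "?y \<in> generate (GG m) {?x}" using pow_in_gen[OF finite_GG gG xc, of w] by simp
  show ?thesis using gen_eqI[OF gG xc yc x_in y_in] vm md by (intro exI[of _ v]) auto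
qed



lemma qm_rep:
  assumes "int p1 mod 2^m = P mod 2^m" "int q1 mod 2^m = Q mod 2^m" "q1 < 2^m" "a < 2" "b < 2"
  shows "int (fst (quat_mult m (p1,a) (q1,b))) =
    (P + (if a = 0 then Q else - Q) + (if a = 1 \<and> b = 1 then 2^(m-1) else 0)) mod 2^m"
proof -
  have "int (fst (quat_mult m (p1,a) (q1,b))) =
    (int p1 + (if a = 0 then int q1 else - int q1) + (if a = 1 \<and> b = 1 then 2^(m-1) else 0)) mod 2^m"
    using qm_int(1)[of q1 m a b p1] assms by simp
  also have "\<dots> = (P + (if a = 0 then Q else - Q) + (if a = 1 \<and> b = 1 then 2^(m-1) else 0)) mod 2^m"
  proof -
    have "(if a = 0 then int q1 else - int q1) mod 2^m = (if a = 0 then Q else - Q) mod 2^m"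
      using assms(2) by (auto intro: mod_minus_cong)
    then show ?thesis using assms(1) by (intro mod_add_cong) (auto intro: mod_add_cong)
  qed
  finally show ?thesis .
qed

lemma arith_r:
  fixes D h r q :: int
  assumes "2*D + 2*h - r = 2*h*q" "r = 0 \<or> r = h \<or> r = 2*h \<or> r = D \<or> r = D + h \<or> r = D + 2*h"
  shows "(2*h) dvd (4*D)"
  using assms(2)
proof (elim disjE)
  assume "r = 0" then show ?thesis using assms(1) by (intro dvdI[of _ _ "2*q-2"]) (simp add: algebra_simps)
next
  assume "r = h" then show ?thesis using assms(1) by (intro dvdI[of _ _ "2*q-1"]) (simp add: algebra_simps)
next
  assume "r = 2*h" then show ?thesis using assms(1) by (intro dvdI[of _ _ "2*q"]) (simp add: algebra_simps)
next
  assume "r = D" then show ?thesis using assms(1) by (intro dvdI[of _ _ "4*q-4"]) (simp add: algebra_simps)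
next
  assume "r = D + h" then show ?thesis using assms(1) by (intro dvdI[of _ _ "4*q-2"]) (simp add: algebra_simps)
next
  assume "r = D + 2*h" then show ?thesis using assms(1) by (intro dvdI[of _ _ "4*q"]) (simp add: algebra_simps)
qed

lemma rep_H:
  fixes p :: "nat \<times> nat"
  assumes m: "m \<ge> 1" and i: "i < 2^m"
    and p: "p \<in> {(0,0),(i,1),(2^(m-1),0),((i+2^(m-1)) mod 2^m,1)}"
  shows "\<exists>P. int (fst p) mod 2^m = P mod 2^m \<and> snd p < 2 \<and> fst p < 2^m \<and>
     ((snd p = 0 \<and> (P = 0 \<or> P = 2^(m-1))) \<or> (snd p = 1 \<and> (P = int i \<or> P = int i + 2^(m-1))))"
proof -
  have hl: "(2::nat)^(m-1) < 2^m" using m by simp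
  from p show ?thesis
  proof (elim insertE emptyE)
    assume "p = (0,0)" then show ?thesis by (intro exI[of _ 0]) simp
  next
    assume "p = (i,1)" then show ?thesis using i by (intro exI[of _ "int i"]) simp
  next
    assume "p = (2^(m-1),0)" then show ?thesis using hl by (intro exI[of _ "2^(m-1)"]) simp
  next
    assume "p = ((i+2^(m-1)) mod 2^m,1)" then show ?thesis
      by (intro exI[of _ "int i + 2^(m-1)"]) (simp add: zmod_int)
  qed
qed

lemma comm_q:
  assumes m: "m \<ge> 1" and i: "i < 2^m" and j: "j < 2^m"
    and p: "p \<in> {(0,0),(i,1),(2^(m-1),0),((i+2^(m-1)) mod 2^m,1)}"
    and q: "q \<in> {(0,0),(j,1),(2^(m-1),0),((j+2^(m-1)) mod 2^m,1)}"
    and eq: "quat_mult m (quat_mult m (i,1) (j,1)) (quat_mult m (i,1) (j,1)) = quat_mult m p q"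
  shows "(2::int)^m dvd 4 * (int i - int j)"
proof -
  let ?h = "(2::int)^(m-1)"
  have hh: "(2::int)^m = 2 * ?h" using two_pow_half[OF m] by simp
  obtain P where P: "int (fst p) mod 2^m = P mod 2^m" "snd p < 2" "fst p < 2^m"
     "(snd p = 0 \<and> (P = 0 \<or> P = ?h)) \<or> (snd p = 1 \<and> (P = int i \<or> P = int i + ?h))"
    using rep_H[OF m i p] by blast
  obtain Q where Q: "int (fst q) mod 2^m = Q mod 2^m" "snd q < 2" "fst q < 2^m"
     "(snd q = 0 \<and> (Q = 0 \<or> Q = ?h)) \<or> (snd q = 1 \<and> (Q = int j \<or> Q = int j + ?h))"
    using rep_H[OF m j q] by blast
  obtain w1 w2 where w: "quat_mult m (i,1) (j,1) = (w1,w2)" by fastforce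
  have w1: "int w1 = (int i - int j + ?h) mod 2^m" using qm_int(1)[of j m 1 1 i] j w by simp
  have w2: "w2 = 0" using w by (simp add: quat_mult_def)
  have w1lt: "w1 < 2^m" using qm_fst_lt[of m "(i,1)" "(j,1)"] w by simp
  have ww: "int (fst (quat_mult m (w1,0) (w1,0))) = ((int i - int j + ?h) + (int i - int j + ?h)) mod 2^m"
    using qm_rep[of w1 m "int i - int j + ?h" w1 "int i - int j + ?h" 0 0] w1 w1lt by simp
  obtain p1 pa where pp: "p = (p1,pa)" by fastforce
  obtain q1 qb where qq: "q = (q1,qb)" by fastforce
  have pq: "int (fst (quat_mult m p q)) =
    (P + (if pa = 0 then Q else - Q) + (if pa = 1 \<and> qb = 1 then ?h else 0)) mod 2^m"
    using qm_rep[of p1 m P q1 Q pa qb] P Q pp qq by simp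
  have sn: "snd (quat_mult m p q) = 0" using eq[symmetric] w w2 by (simp add: quat_mult_def)
  have ab: "pa = qb" using sn P(2) Q(2) pp qq by (auto simp: quat_mult_def split: if_splits)
  have "((int i - int j + ?h) + (int i - int j + ?h)) mod 2^m =
    (P + (if pa = 0 then Q else - Q) + (if pa = 1 \<and> qb = 1 then ?h else 0)) mod 2^m"
    using ww pq eq w w2 by simp
  then have "2^m dvd ((int i - int j + ?h) + (int i - int j + ?h)) - (P + (if pa = 0 then Q else - Q) + (if pa = 1 \<and> qb = 1 then ?h else 0))"
    by (simp add: mod_eq_dvd_iff)
  then obtain t where t: "((int i - int j + ?h) + (int i - int j + ?h)) - (P + (if pa = 0 then Q else - Q) + (if pa = 1 \<and> qb = 1 then ?h else 0)) = 2 * ?h * t"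
    using hh by (auto elim!: dvdE)
  define r where "r = P + (if pa = 0 then Q else - Q) + (if pa = 1 \<and> qb = 1 then ?h else 0)"
  have t2: "2 * (int i - int j) + 2 * ?h - r = 2 * ?h * t" using t unfolding r_def by simp
  have "r = 0 \<or> r = ?h \<or> r = 2 * ?h \<or> r = (int i - int j) \<or> r = (int i - int j) + ?h \<or> r = (int i - int j) + 2 * ?h"
    using P(4) Q(4) ab pp qq unfolding r_def by auto
  then have "(2 * ?h) dvd (4 * (int i - int j))" using arith_r[OF t2] by blast
  then show ?thesis using hh by simp
qed

lemma comm_abstract:
  fixes G (structure)
  assumes "group G" "subgroup H G" "subgroup K G" "g \<in> H" "k \<in> K"
    "H <#>\<^bsub>G\<^esub> K = K <#>\<^bsub>G\<^esub> H"
  shows "\<exists>p\<in>H. \<exists>q\<in>K. (g \<otimes>\<^bsub>G\<^esub> k) \<otimes>\<^bsub>G\<^esub> (g \<otimes>\<^bsub>G\<^esub> k) = p \<otimes>\<^bsub>G\<^esub> q"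
proof -
  interpret group G by fact
  have "k \<otimes> g \<in> K <#> H" using assms(4,5) unfolding set_mult_def by blast
  then have "k \<otimes> g \<in> H <#> K" using assms(6) by simp
  then obtain p q where pq: "p \<in> H" "q \<in> K" "k \<otimes> g = p \<otimes> q" unfolding set_mult_def by blast
  have c: "g \<in> carrier G" "k \<in> carrier G" "p \<in> carrier G" "q \<in> carrier G"
    using assms(2-5) pq subgroup.mem_carrier by metis+
  have "(g \<otimes> k) \<otimes> (g \<otimes> k) = g \<otimes> (k \<otimes> g) \<otimes> k" using c by (simp add: m_assoc)
  also have "\<dots> = (g \<otimes> p) \<otimes> (q \<otimes> k)" using c pq by (simp add: m_assoc)
  finally show ?thesis
    using assms(2-5) pq by (intro bexI[of _ "g \<otimes> p"] bexI[of _ "q \<otimes> k"]) (auto intro: subgroup.m_closed)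
qed

lemma comm_pair:
  assumes m: "m \<ge> 1" and c: "c \<in> {0,1}" and d: "d \<in> {0,1}" and i: "i < 2^m" and j: "j < 2^m"
    and comm: "generate (GG m) {(c,(i,1))} <#>\<^bsub>GG m\<^esub> generate (GG m) {(d,(j,1))} =
               generate (GG m) {(d,(j,1))} <#>\<^bsub>GG m\<^esub> generate (GG m) {(c,(i,1))}"
  shows "(2::int)^m dvd 4 * (int i - int j)"
proof -
  let ?g = "(c,(i,1::nat))" and ?k = "(d,(j,1::nat))"
  have gG: "group (GG m)" using group_GG m by simp
  interpret G: group "GG m" by (rule gG)
  have gc: "?g \<in> carrier (GG m)" unfolding mem_GG using c i by simp
  have kc: "?k \<in> carrier (GG m)" unfolding mem_GG using d j by simp
  have sH: "subgroup (generate (GG m) {?g}) (GG m)" using gc by (intro G.generate_is_subgroup) simp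
  have sK: "subgroup (generate (GG m) {?k}) (GG m)" using kc by (intro G.generate_is_subgroup) simp
  obtain p q where pq: "p \<in> generate (GG m) {?g}" "q \<in> generate (GG m) {?k}"
    "(?g \<otimes>\<^bsub>GG m\<^esub> ?k) \<otimes>\<^bsub>GG m\<^esub> (?g \<otimes>\<^bsub>GG m\<^esub> ?k) = p \<otimes>\<^bsub>GG m\<^esub> q"
    using comm_abstract[OF gG sH sK generate.incl[of ?g "{?g}"] generate.incl[of ?k "{?k}"] comm] by auto
  have p: "snd p \<in> {(0,0),(i,1),(2^(m-1),0),((i+2^(m-1)) mod 2^m,1)}"
    using pq(1) unfolding gen_y[OF m c i] by auto
  have q: "snd q \<in> {(0,0),(j,1),(2^(m-1),0),((j+2^(m-1)) mod 2^m,1)}"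
    using pq(2) unfolding gen_y[OF m d j] by auto
  have "quat_mult m (quat_mult m (i,1) (j,1)) (quat_mult m (i,1) (j,1)) = quat_mult m (snd p) (snd q)"
    using arg_cong[OF pq(3), of snd] by (simp add: mult_DirProd')
  then show ?thesis using comm_q[OF m i j p q] by simp
qed



definition YY :: "nat \<Rightarrow> (int \<times> nat \<times> nat) set set" where
  "YY m = (\<lambda>(c,i). generate (GG m) {(c,(i,1))}) ` ({0,1} \<times> {0..<2^m})"
definition RR :: "nat \<Rightarrow> (int \<times> nat \<times> nat) set set" where
  "RR m = (\<lambda>(c,v). generate (GG m) {(c,(2^v mod 2^m,0))}) ` ({0,1} \<times> {0..m})"

lemma C_sub: assumes m: "m \<ge> 1" shows "cyclic_subgroups (GG m) \<subseteq> YY m \<union> RR m"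
proof
  fix H assume "H \<in> cyclic_subgroups (GG m)"
  then obtain g where g: "g \<in> carrier (GG m)" "H = generate (GG m) {g}"
    unfolding cyclic_subgroups_def by blast
  obtain c i a where gg: "g = (c,(i,a))" by (cases g) auto
  have ci: "c = 0 \<or> c = 1" "i < 2^m" "a < 2" using g(1) unfolding gg mem_GG by auto
  show "H \<in> YY m \<union> RR m"
  proof (cases "a = 0")
    case True
    then obtain v where v: "v \<le> m" "H = generate (GG m) {(c,(2^v mod 2^m,0))}"
      using gen_rot[OF m _ ci(2), of c] ci(1) g(2) gg by auto
    then have "H \<in> RR m" unfolding RR_def using ci(1) by (intro image_eqI[of _ _ "(c,v)"]) auto
    then show ?thesis by simp
  next
    case False
    then have "a = 1" using ci by simp
    then have "H \<in> YY m" unfolding YY_def using ci g(2) gg by (intro image_eqI[of _ _ "(c,i)"]) auto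
    then show ?thesis by simp
  qed
qed

lemma card_RR: "card (RR m) \<le> 2 * (m + 1)"
proof -
  have "card (RR m) \<le> card ({0,1::int} \<times> {0..m})" unfolding RR_def by (rule card_image_le) simp
  also have "\<dots> = 2 * (m + 1)" by (simp add: card_cartesian_product)
  finally show ?thesis .
qed

lemma finite_C: "finite (cyclic_subgroups (GG m))"
proof -
  have "cyclic_subgroups (GG m) = (\<lambda>g. generate (GG m) {g}) ` carrier (GG m)"
    unfolding cyclic_subgroups_def by blast
  then show ?thesis using finite_GG by simp
qed

lemma card_C_ge: assumes m: "m \<ge> 1" shows "2^(m-1) \<le> card (cyclic_subgroups (GG m))"
proof -
  let ?f = "\<lambda>i. generate (GG m) {(0::int,(i,1::nat))}"
  have hl: "(2::nat)^(m-1) < 2^m" using m by simp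
  have hh: "(2::nat)^(m-1) + 2^(m-1) = 2^m" using m by (metis Suc_diff_le diff_Suc_1 mult_2 power_Suc)
  have inj: "inj_on ?f {0..<2^(m-1)}"
  proof (rule inj_onI)
    fix i j assume ij: "i \<in> {0..<2^(m-1)}" "j \<in> {0..<2^(m-1)}" "?f i = ?f j"
    have il: "i < 2^m" and jl: "j < 2^m" using ij(1,2) less_trans[OF _ hl] by auto
    have "(0::int,(j,1::nat)) \<in> ?f j" by (rule generate.incl) simp
    then have "(0::int,(j,1::nat)) \<in> ?f i" using ij(3) by simp
    moreover have "?f i = {(0,(0,0)), (0,(i,1)), (0,(2^(m-1),0)), (0,((i+2^(m-1)) mod 2^m,1))}"
      using gen_y[of m 0 i] m il by simp
    ultimately have "j = i \<or> j = (i + 2^(m-1)) mod 2^m" by auto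
    moreover have "(i + 2^(m-1)) mod 2^m = i + 2^(m-1)" using ij(1) hh by simp
    ultimately show "i = j" using ij(2) by auto
  qed
  have "?f ` {0..<2^(m-1)} \<subseteq> cyclic_subgroups (GG m)"
  proof
    fix H assume "H \<in> ?f ` {0..<2^(m-1)}"
    then obtain i where i: "i < 2^(m-1)" "H = ?f i" by auto
    have "(0::int,(i,1::nat)) \<in> carrier (GG m)" unfolding mem_GG using less_trans[OF i(1) hl] by simp
    then show "H \<in> cyclic_subgroups (GG m)" unfolding cyclic_subgroups_def using i(2) by blast
  qed
  then have "card (?f ` {0..<2^(m-1)}) \<le> card (cyclic_subgroups (GG m))"
    using finite_C by (rule card_mono[rotated])
  then show ?thesis using card_image[OF inj] by simp
qed



definition EE :: "nat \<Rightarrow> ((int \<times> nat) \<times> (int \<times> nat)) set" where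
  "EE m = {((c,i),(d,j)). c \<in> {0,1} \<and> d \<in> {0,1} \<and> i < 2^m \<and> j < 2^m \<and> (2::int)^m dvd 4 * (int i - int j)}"

definition pairmap :: "nat \<Rightarrow> (int \<times> nat) \<times> (int \<times> nat) \<Rightarrow> (int \<times> nat \<times> nat) set \<times> (int \<times> nat \<times> nat) set" where
  "pairmap m = (\<lambda>((c,i),(d,j)). (generate (GG m) {(c,(i,1))}, generate (GG m) {(d,(j,1))}))"

definition SS :: "nat \<Rightarrow> ((int \<times> nat \<times> nat) set \<times> (int \<times> nat \<times> nat) set) set" where
  "SS m = {(H, K). H \<in> cyclic_subgroups (GG m) \<and> K \<in> cyclic_subgroups (GG m)
             \<and> H <#>\<^bsub>GG m\<^esub> K = K <#>\<^bsub>GG m\<^esub> H}"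

lemma SS_sub: assumes m: "m \<ge> 1"
  shows "SS m \<subseteq> (RR m \<times> cyclic_subgroups (GG m)) \<union> (cyclic_subgroups (GG m) \<times> RR m) \<union> pairmap m ` EE m"
proof
  fix x assume "x \<in> SS m"
  then obtain H K where x: "x = (H,K)" "H \<in> cyclic_subgroups (GG m)" "K \<in> cyclic_subgroups (GG m)"
    "H <#>\<^bsub>GG m\<^esub> K = K <#>\<^bsub>GG m\<^esub> H" unfolding SS_def by blast
  show "x \<in> (RR m \<times> cyclic_subgroups (GG m)) \<union> (cyclic_subgroups (GG m) \<times> RR m) \<union> pairmap m ` EE m"
  proof (cases "H \<in> RR m \<or> K \<in> RR m")
    case True then show ?thesis using x by auto
  next
    case False
    then have "H \<in> YY m" "K \<in> YY m" using C_sub[OF m] x(2,3) by auto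
    obtain c i where ci: "(c,i) \<in> {0,1} \<times> {0..<2^m}" "H = generate (GG m) {(c,(i,1))}"
      using \<open>H \<in> YY m\<close> unfolding YY_def by blast
    obtain d j where dj: "(d,j) \<in> {0,1} \<times> {0..<2^m}" "K = generate (GG m) {(d,(j,1))}"
      using \<open>K \<in> YY m\<close> unfolding YY_def by blast
    have cidj: "c \<in> {0,1}" "i < 2^m" "H = generate (GG m) {(c,(i,1))}"
        "d \<in> {0,1}" "j < 2^m" "K = generate (GG m) {(d,(j,1))}"
      using ci dj by auto
    have "(2::int)^m dvd 4 * (int i - int j)"
      using comm_pair[OF m cidj(1) cidj(4) cidj(2) cidj(5)] x(4) cidj(3,6) by simp
    then have "((c,i),(d,j)) \<in> EE m" unfolding EE_def using cidj by auto
    moreover have "x = pairmap m ((c,i),(d,j))" unfolding pairmap_def using x(1) cidj by simp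
    ultimately show ?thesis by blast
  qed
qed

lemma card_EE: assumes m: "m \<ge> 2" shows "card (EE m) \<le> 16 * 2^m"
proof -
  define q :: nat where "q = 2^(m-2)"
  have Mq: "(2::nat)^m = 4 * q" unfolding q_def using m
    by (metis (no_types, lifting) add_diff_inverse_nat not_less power_add power2_eq_square
        mult_2 numeral_Bit0 le_add_diff_inverse2 nat_less_le)
  have qpos: "q > 0" unfolding q_def by simp
  define F where "F = (\<lambda>(c::int,d::int,i::nat,s::nat). ((c,i),(d, i mod q + s * q)))"
  have sub: "EE m \<subseteq> F ` ({0,1} \<times> {0,1} \<times> {0..<2^m} \<times> {0..<4})"
  proof
    fix x assume "x \<in> EE m"
    then obtain c i d j where x: "x = ((c,i),(d,j))" "c \<in> {0,1}" "d \<in> {0,1}" "i < 2^m" "j < 2^m"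
      "(2::int)^m dvd 4 * (int i - int j)" unfolding EE_def by auto
    have "int (4 * q) dvd 4 * (int i - int j)" using x(6) Mq by (metis of_nat_numeral of_nat_power)
    then have "4 * int q dvd 4 * (int i - int j)" by (simp only: of_nat_mult of_nat_numeral)
    then have "int q dvd (int i - int j)" using dvd_mult_cancel_left[of 4 "int q" "int i - int j"] by simp
    then have "int i mod int q = int j mod int q" by (simp add: mod_eq_dvd_iff)
    then have "i mod q = j mod q" by (metis of_nat_eq_iff zmod_int)
    then have "j = i mod q + (j div q) * q" by simp
    moreover have "j div q < 4" using x(5) Mq qpos by (simp add: less_mult_imp_div_less)
    ultimately show "x \<in> F ` ({0,1} \<times> {0,1} \<times> {0..<2^m} \<times> {0..<4})"
      unfolding F_def using x by (intro image_eqI[of _ _ "(c,d,i,j div q)"]) auto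
  qed
  have "card (EE m) \<le> card (F ` ({0,1::int} \<times> {0,1::int} \<times> {0..<(2::nat)^m} \<times> {0..<4::nat}))"
    by (rule card_mono[OF _ sub]) simp
  also have "\<dots> \<le> card ({0,1::int} \<times> {0,1::int} \<times> {0..<(2::nat)^m} \<times> {0..<4::nat})"
    by (rule card_image_le) simp
  also have "\<dots> = 16 * 2^m" by (simp add: card_cartesian_product)
  finally show ?thesis .
qed



lemma card_SS: assumes m: "m \<ge> 2"
  shows "card (SS m) \<le> 2 * (2 * (m + 1)) * card (cyclic_subgroups (GG m)) + 16 * 2^m"
proof -
  let ?C = "cyclic_subgroups (GG m)"
  have m1: "m \<ge> 1" using m by simp
  have fR: "finite (RR m)" unfolding RR_def by simp
  have fE: "finite (EE m)"
  proof -
    have "EE m \<subseteq> ({0,1} \<times> {0..<2^m}) \<times> ({0,1} \<times> {0..<2^m})" unfolding EE_def by auto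
    then show ?thesis by (rule finite_subset) simp
  qed
  have "card (SS m) \<le> card ((RR m \<times> ?C) \<union> (?C \<times> RR m) \<union> pairmap m ` EE m)"
    by (rule card_mono[OF _ SS_sub[OF m1]]) (simp add: fR finite_C fE)
  also have "\<dots> \<le> card (RR m \<times> ?C) + card (?C \<times> RR m) + card (pairmap m ` EE m)"
    by (meson add_le_mono card_Un_le le_refl order_trans)
  also have "\<dots> \<le> card (RR m) * card ?C + card ?C * card (RR m) + card (EE m)"
    by (simp add: card_cartesian_product card_image_le fE)
  also have "\<dots> \<le> 2 * (2 * (m + 1)) * card ?C + 16 * 2^m"
  proof -
    have "card (RR m) * card ?C \<le> (2 * (m + 1)) * card ?C" using card_RR by (rule mult_right_mono) simp
    moreover have "card ?C * card (RR m) = card (RR m) * card ?C" by simp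
    ultimately show ?thesis using card_EE[OF m] by linarith
  qed
  finally show ?thesis .
qed

lemma csd_bound: assumes m: "m \<ge> 2"
  shows "csd (GG m) \<le> 8 * (real m + 1) / 2^m + 64 / 2^m"
proof -
  let ?C = "cyclic_subgroups (GG m)"
  define NN where "NN = real (card ?C)"
  define XX :: real where "XX = 2^m"
  have Xpos: "XX > 0" unfolding XX_def by simp
  have NX: "NN \<ge> XX / 2" unfolding NN_def XX_def
  proof -
    have a: "(2::nat)^(m-1) \<le> card ?C" using card_C_ge m by simp
    have b: "(2::real)^m = 2 * 2^(m-1)"
    proof -
      have "(2::real)^m = 2^(Suc (m-1))" using m by simp
      then show ?thesis by simp
    qed
    have c: "(2::real)^(m-1) \<le> real (card ?C)" using a by (metis of_nat_le_iff of_nat_numeral of_nat_power)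
    show "real (card ?C) \<ge> (2::real)^m / 2" using b c by simp
  qed
  have Npos: "NN > 0" using NX Xpos by simp
  have S: "real (card (SS m)) \<le> 4 * (real m + 1) * NN + 16 * XX"
    using card_SS[OF m] unfolding NN_def XX_def
    by (metis (mono_tags, lifting) of_nat_1 of_nat_add of_nat_le_iff of_nat_mult of_nat_numeral of_nat_power
        mult.assoc numeral_Bit0 mult_2 )
  have "csd (GG m) = real (card (SS m)) / NN^2" unfolding csd_def SS_def NN_def by simp
  also have "\<dots> \<le> (4 * (real m + 1) * NN + 16 * XX) / NN^2"
    using S Npos by (simp add: divide_right_mono)
  also have "\<dots> = 4 * (real m + 1) / NN + 16 * XX / NN^2"
    using Npos by (simp add: field_simps power2_eq_square)
  also have "\<dots> \<le> 4 * (real m + 1) / (XX/2) + 16 * XX / (XX/2)^2"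
  proof (rule add_mono)
    show "4 * (real m + 1) / NN \<le> 4 * (real m + 1) / (XX/2)"
      using NX Xpos by (intro divide_left_mono) auto
    show "16 * XX / NN^2 \<le> 16 * XX / (XX/2)^2"
      using NX Xpos by (intro divide_left_mono power_mono mult_pos_pos) auto
  qed
  also have "\<dots> = 8 * (real m + 1) / XX + 64 / XX"
    using Xpos by (simp add: field_simps power2_eq_square)
  finally show ?thesis unfolding XX_def by simp
qed

lemma bound_lim: "(\<lambda>m. 8 * (real m + 1) / 2^m + 64 / 2^m) \<longlonglongrightarrow> (0::real)"
  by real_asymp

theorem corollary3p5:
  shows "(\<lambda>m. csd (integer_mod_group 2 \<times>\<times> quaternion_group m)) \<longlonglongrightarrow> 0"
proof (rule tendsto_sandwich[OF _ _ tendsto_const bound_lim])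
  show "\<forall>\<^sub>F n in sequentially. 0 \<le> csd (integer_mod_group 2 \<times>\<times> quaternion_group n)"
    by (simp add: csd_def)
  show "\<forall>\<^sub>F n in sequentially. csd (integer_mod_group 2 \<times>\<times> quaternion_group n) \<le> 8 * (real n + 1) / 2^n + 64 / 2^n"
    using eventually_ge_at_top[of 2] by eventually_elim (rule csd_bound)
qed

end
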